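(* Let $m\ge1$ and $0\le r\le m$. Let $\mathcal{G}\subseteq F_{m,r}$ be a linear subspace such that $\pi(\mathcal{G})=\mathcal{G}$ for all $\pi\in Sym(m,r)$. Then $\mathcal{G}=\{0\}$ or $\mathcal{G}=F_{m,r}$.
   Context: $F_{m,r}$ is the $\mathbb{F}_2$-vector space with basis the monomials $x_I=\prod_{i\in I}x_i$, $I\subseteq[m]$, $|I|=r$ (homogeneous degree-$r$ multilinear polynomials over $\mathbb{F}_2$ in $x_1,\dots,x_m$). For $A\in GL_m(\mathbb{F}_2)$ and $b\in\mathbb{F}_2^m$, the map $\pi_{A,b}:F_{m,r}\to F_{m,r}$ sends $P$ to the degree-$r$ homogeneous part of the multilinear reduction (using $x_i^2=x_i$) of $P(Ax+b)$. $Sym(m,r)$ is the set of all such maps $\pi_{A,b}$. *)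

theory Defs
  imports Main
begin

text \<open>Multilinear polynomials over F_2 in variables x_0, ..., x_(m-1) are represented
  as (finite) sets of monomials; a monomial x_I is represented by its variable set I.
  Addition is symmetric difference; the product is the multilinear reduction
  (x_i^2 = x_i) of the ordinary product, i.e. x_I * x_J = x_(I union J), with
  coefficients counted mod 2.\<close>

type_synonym mlpoly = "nat set set"

definition madd :: "mlpoly \<Rightarrow> mlpoly \<Rightarrow> mlpoly" where
  "madd P Q = (P - Q) \<union> (Q - P)"

definition mmul :: "mlpoly \<Rightarrow> mlpoly \<Rightarrow> mlpoly" where
  "mmul P Q = {K. odd (card {(I, J). I \<in> P \<and> J \<in> Q \<and> I \<union> J = K})}"

definition mone :: mlpoly where
  "mone = {{}}"

definition mprod_list :: "mlpoly list \<Rightarrow> mlpoly" where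
  "mprod_list ps = foldr mmul ps mone"

definition msubst :: "(nat \<Rightarrow> mlpoly) \<Rightarrow> mlpoly \<Rightarrow> mlpoly" where
  "msubst s P = {K. odd (card {I \<in> P. K \<in> mprod_list (map s (sorted_list_of_set I))})}"

definition hom_part :: "nat \<Rightarrow> mlpoly \<Rightarrow> mlpoly" where
  "hom_part r P = {K \<in> P. card K = r}"

definition Fmr :: "nat \<Rightarrow> nat \<Rightarrow> mlpoly set" where
  "Fmr m r = Pow {I. I \<subseteq> {0..<m} \<and> card I = r}"

text \<open>m x m matrices over F_2 (entries indexed by i, j < m; True = 1).\<close>
definition matmul2 :: "nat \<Rightarrow> (nat \<Rightarrow> nat \<Rightarrow> bool) \<Rightarrow> (nat \<Rightarrow> nat \<Rightarrow> bool) \<Rightarrow> nat \<Rightarrow> nat \<Rightarrow> bool" where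
  "matmul2 m A B i k = odd (card {j. j < m \<and> A i j \<and> B j k})"

definition GL2 :: "nat \<Rightarrow> (nat \<Rightarrow> nat \<Rightarrow> bool) set" where
  "GL2 m = {A. \<exists>B. (\<forall>i<m. \<forall>k<m. matmul2 m A B i k = (i = k))
                 \<and> (\<forall>i<m. \<forall>k<m. matmul2 m B A i k = (i = k))}"

definition aff_form :: "nat \<Rightarrow> (nat \<Rightarrow> nat \<Rightarrow> bool) \<Rightarrow> (nat \<Rightarrow> bool) \<Rightarrow> nat \<Rightarrow> mlpoly" where
  "aff_form m A b i = {{j} | j. j < m \<and> A i j} \<union> (if b i then {{}} else {})"

definition pi_map :: "nat \<Rightarrow> nat \<Rightarrow> (nat \<Rightarrow> nat \<Rightarrow> bool) \<Rightarrow> (nat \<Rightarrow> bool) \<Rightarrow> mlpoly \<Rightarrow> mlpoly" where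
  "pi_map m r A b P = hom_part r (msubst (aff_form m A b) P)"

definition Sym :: "nat \<Rightarrow> nat \<Rightarrow> (mlpoly \<Rightarrow> mlpoly) set" where
  "Sym m r = {pi_map m r A b | A b. A \<in> GL2 m}"

text \<open>F_2-linear subspace of F_{m,r} (scalars are 0,1, so closure under + suffices).\<close>
definition lin_subspace :: "nat \<Rightarrow> nat \<Rightarrow> mlpoly set \<Rightarrow> bool" where
  "lin_subspace m r G \<longleftrightarrow> G \<subseteq> Fmr m r \<and> {} \<in> G \<and> (\<forall>P\<in>G. \<forall>Q\<in>G. madd P Q \<in> G)"

end

theory Submission
  imports Defs
begin

definition At :: "nat \<Rightarrow> nat \<Rightarrow> nat \<Rightarrow> nat \<Rightarrow> bool" where
  "At a b = (\<lambda>k l. k = l \<or> (k = a \<and> l = b))"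

lemma mmul_inj:
  assumes inj: "\<And>I1 J1 I2 J2. I1\<in>P \<Longrightarrow> J1\<in>Q \<Longrightarrow> I2\<in>P \<Longrightarrow> J2\<in>Q \<Longrightarrow> I1\<union>J1 = I2\<union>J2 \<Longrightarrow> I1=I2 \<and> J1=J2"
  shows "mmul P Q = {I\<union>J | I J. I\<in>P \<and> J\<in>Q}"
proof -
  have "K \<in> mmul P Q \<longleftrightarrow> K \<in> {I\<union>J | I J. I\<in>P \<and> J\<in>Q}" for K
  proof (cases "\<exists>I J. I\<in>P \<and> J\<in>Q \<and> K = I\<union>J")
    case True
    then obtain I0 J0 where h: "I0\<in>P" "J0\<in>Q" "K = I0\<union>J0" by blast
    have "{(I, J). I \<in> P \<and> J \<in> Q \<and> I \<union> J = K} = {(I0,J0)}"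
      using h inj by blast
    then show ?thesis unfolding mmul_def using h by auto
  next
    case False
    then have eq: "{(I, J). I \<in> P \<and> J \<in> Q \<and> I \<union> J = K} = {}" by blast
    have "K \<notin> mmul P Q" unfolding mmul_def by (simp only: eq mem_Collect_eq card.empty) simp
    then show ?thesis using False by blast
  qed
  then show ?thesis by blast
qed

lemma aff_At:
  assumes "k < m" "a < m" "b < m" "a \<noteq> b"
  shows "aff_form m (At a b) (\<lambda>_. False) k = (if k = a then {{a},{b}} else {{k}})"
proof (cases "k = a")
  case True
  have "{{j} | j. j < m \<and> At a b k j} = {{a},{b}}" using assms True unfolding At_def by blast
  then show ?thesis using True unfolding aff_form_def by simp
next
  case False
  have "{{j} | j. j < m \<and> At a b k j} = {{k}}" using assms False unfolding At_def by blast
  then show ?thesis using False unfolding aff_form_def by simp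
qed

lemma mmul_21:
  assumes "a \<notin> S" "a \<noteq> b"
  shows "mmul {{a},{b}} {S} = {insert a S, insert b S}"
proof -
  have "mmul {{a},{b}} {S} = {I\<union>J | I J. I\<in>{{a},{b}} \<and> J\<in>{S}}"
  proof (rule mmul_inj)
    fix I1 J1 I2 J2
    assume h: "I1 \<in> {{a},{b}}" "J1 \<in> {S}" "I2 \<in> {{a},{b}}" "J2 \<in> {S}" "I1 \<union> J1 = I2 \<union> J2"
    have "a \<notin> insert b S" using assms by simp
    then have "insert a S \<noteq> insert b S" by blast
    then show "I1 = I2 \<and> J1 = J2" using h by fastforce
  qed
  also have "\<dots> = {insert a S, insert b S}" by blast
  finally show ?thesis .
qed

lemma mmul_12:
  assumes "insert k S1 \<noteq> insert k S2"
  shows "mmul {{k}} {S1,S2} = {insert k S1, insert k S2}"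
proof -
  have "mmul {{k}} {S1,S2} = {I\<union>J | I J. I\<in>{{k}} \<and> J\<in>{S1,S2}}"
  proof (rule mmul_inj)
    fix I1 J1 I2 J2
    assume h: "I1 \<in> {{k}}" "J1 \<in> {S1,S2}" "I2 \<in> {{k}}" "J2 \<in> {S1,S2}" "I1 \<union> J1 = I2 \<union> J2"
    then show "I1 = I2 \<and> J1 = J2" using assms by fastforce
  qed
  also have "\<dots> = {insert k S1, insert k S2}" by blast
  finally show ?thesis .
qed

lemma mmul_11: "mmul {{k}} {S} = {insert k S}"
proof -
  have "mmul {{k}} {S} = {I\<union>J | I J. I\<in>{{k}} \<and> J\<in>{S}}"
    by (rule mmul_inj) blast
  also have "\<dots> = {insert k S}" by blast
  finally show ?thesis .
qed
lemma prod_At: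
  assumes "distinct xs" "set xs \<subseteq> {..<m}" "a<m" "b<m" "a\<noteq>b"
  shows "foldr mmul (map (aff_form m (At a b) (\<lambda>_. False)) xs) mone
     = (if a \<in> set xs then {set xs, insert b (set xs - {a})} else {set xs})"
  using assms
proof (induction xs)
  case Nil
  then show ?case by (simp add: mone_def)
next
  case (Cons k xs)
  let ?S = "set xs"
  have IH: "foldr mmul (map (aff_form m (At a b) (\<lambda>_. False)) xs) mone
     = (if a \<in> ?S then {?S, insert b (?S - {a})} else {?S})" using Cons by auto
  have kS: "k \<notin> ?S" "k < m" using Cons.prems by auto
  have L: "foldr mmul (map (aff_form m (At a b) (\<lambda>_. False)) (k # xs)) mone
     = mmul (aff_form m (At a b) (\<lambda>_. False) k) (foldr mmul (map (aff_form m (At a b) (\<lambda>_. False)) xs) mone)"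
    by simp
  note af = aff_At[OF kS(2) Cons.prems(3-5)]
  show ?case
  proof (cases "k = a")
    case True
    have aS: "a \<notin> ?S" using kS True by simp
    have e: "insert a ?S - {a} = ?S" using aS by blast
    show ?thesis unfolding L IH af using True aS e mmul_21[OF aS Cons.prems(5)] by simp
  next
    case False
    show ?thesis
    proof (cases "a \<in> ?S")
      case True
      have ne: "insert k ?S \<noteq> insert k (insert b (?S - {a}))"
      proof
        assume eq: "insert k ?S = insert k (insert b (?S - {a}))"
        have "a \<in> insert k ?S" using True by simp
        then have "a \<in> insert k (insert b (?S - {a}))" by (simp only: eq)
        then show False using False Cons.prems(5) by simp
      qed
      have e: "insert k (insert b (?S - {a})) = insert b (insert k ?S - {a})" using False by blast
      show ?thesis unfolding L IH af using True False mmul_12[OF ne] e by simp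
    next
      case F2: False
      show ?thesis unfolding L IH af using F2 False mmul_11 by simp
    qed
  qed
qed

lemma GL_At:
  assumes "a < m" "b < m" "a \<noteq> b"
  shows "At a b \<in> GL2 m"
proof -
  have "matmul2 m (At a b) (At a b) i k = (i = k)" if "i<m" "k<m" for i k
  proof -
    have "{j. j < m \<and> At a b i j \<and> At a b j k} =
      (if i = k then {i} else if i = a \<and> k = b then {a, b} else {})"
      using assms that unfolding At_def by auto
    then show ?thesis unfolding matmul2_def using assms by auto
  qed
  then show ?thesis unfolding GL2_def by blast
qed

definition Mv :: "nat \<Rightarrow> nat \<Rightarrow> mlpoly \<Rightarrow> mlpoly" where
  "Mv a b P = {K. b \<in> K \<and> a \<notin> K \<and> insert a (K - {b}) \<in> P}"

lemma pi_At:
  assumes ab: "a<m" "b<m" "a\<noteq>b" and P: "P \<subseteq> {I. I \<subseteq> {0..<m} \<and> card I = r}"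
  shows "pi_map m r (At a b) (\<lambda>_. False) P = madd P (Mv a b P)"
proof -
  let ?s = "aff_form m (At a b) (\<lambda>_. False)"
  let ?f = "\<lambda>I. if a \<in> I then {I, insert b (I - {a})} else {I}"
  have fin: "finite I" if "I \<in> P" for I using P that finite_subset by blast
  have prod: "mprod_list (map ?s (sorted_list_of_set I)) = ?f I" if "I \<in> P" for I
  proof -
    have "I \<subseteq> {..<m}" using P that by fastforce
    then show ?thesis unfolding mprod_list_def using prod_At[of "sorted_list_of_set I" m a b] ab fin[OF that]
      by simp
  qed
  have "K \<in> pi_map m r (At a b) (\<lambda>_. False) P \<longleftrightarrow> K \<in> madd P (Mv a b P)" for K
  proof (cases "card K = r")
    case False
    have "K \<notin> P" using P False by auto
    moreover have "K \<notin> Mv a b P"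
    proof
      assume "K \<in> Mv a b P"
      then have h: "b \<in> K" "a \<notin> K" "insert a (K - {b}) \<in> P" unfolding Mv_def by auto
      then have "finite (insert a (K - {b}))" using fin by (simp only:)
      then have "finite K" using h by auto
      then have "card (insert a (K - {b})) = card K" using h
        card_insert_disjoint[of "K - {b}" a] card_Suc_Diff1[of K b] by simp
      then show False using h P False by auto
    qed
    ultimately show ?thesis using False unfolding pi_map_def hom_part_def madd_def by auto
  next
    case True
    have key: "K \<in> ?f I \<longleftrightarrow> K = I \<or> (K \<in> Mv a b P \<and> I = insert a (K - {b}))" if IP: "I \<in> P" for I
    proof
      assume K: "K \<in> ?f I"
      show "K = I \<or> (K \<in> Mv a b P \<and> I = insert a (K - {b}))"
      proof (cases "K = I")
        case True then show ?thesis by simp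
      next
        case False
        have aI: "a \<in> I" using K False by (cases "a \<in> I") simp_all
        have Kd: "K = insert b (I - {a})" using K False aI by simp
        have cI: "card I = r" using P IP by blast
        have fI: "finite I" using fin IP by blast
        have bI: "b \<notin> I"
        proof
          assume bI: "b \<in> I"
          have "insert b (I - {a}) = I - {a}" using bI ab(3) by blast
          then have "K = I - {a}" using Kd by simp
          then have "card K = card I - 1" using aI by simp
          moreover have "card I > 0" using fI aI card_gt_0_iff by blast
          ultimately show False using True cI by simp
        qed
        have Ie: "I = insert a (K - {b})" using Kd aI bI ab(3) by blast
        have "b \<in> K" "a \<notin> K" using Kd ab(3) by blast+
        then have "K \<in> Mv a b P" unfolding Mv_def using Ie IP by simp
        then show ?thesis using Ie by simp
      qed
    next
      assume R: "K = I \<or> (K \<in> Mv a b P \<and> I = insert a (K - {b}))"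
      show "K \<in> ?f I"
      proof (cases "K = I")
        case True then show ?thesis by simp
      next
        case False
        then have M: "K \<in> Mv a b P" and Ie: "I = insert a (K - {b})" using R by blast+
        have bK: "b \<in> K" "a \<notin> K" using M unfolding Mv_def by blast+
        have aI: "a \<in> I" using Ie by blast
        have "insert b (I - {a}) = K" using Ie bK ab(3) by blast
        then show ?thesis using aI by simp
      qed
    qed
    have eq: "{I \<in> P. K \<in> mprod_list (map ?s (sorted_list_of_set I))}
       = (if K \<in> P then {K} else {}) \<union> (if K \<in> Mv a b P then {insert a (K - {b})} else {})"
    proof -
      have "{I \<in> P. K \<in> mprod_list (map ?s (sorted_list_of_set I))} = {I \<in> P. K \<in> ?f I}"
      proof (rule Collect_cong)
        fix I show "(I \<in> P \<and> K \<in> mprod_list (map ?s (sorted_list_of_set I))) = (I \<in> P \<and> K \<in> ?f I)"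
          using prod[of I] by blast
      qed
      also have "\<dots> = {I \<in> P. K = I \<or> (K \<in> Mv a b P \<and> I = insert a (K - {b}))}"
        using key by blast
      also have "\<dots> = (if K \<in> P then {K} else {}) \<union> (if K \<in> Mv a b P then {insert a (K - {b})} else {})"
      proof -
        have "K \<in> Mv a b P \<Longrightarrow> insert a (K - {b}) \<in> P" unfolding Mv_def by blast
        then show ?thesis by auto
      qed
      finally show ?thesis .
    qed
    have ne: "K \<noteq> insert a (K - {b})" if "K \<in> Mv a b P" using that unfolding Mv_def by auto
    have "K \<in> pi_map m r (At a b) (\<lambda>_. False) P \<longleftrightarrow>
      odd (card ((if K \<in> P then {K} else {}) \<union> (if K \<in> Mv a b P then {insert a (K - {b})} else {})))"
      unfolding pi_map_def hom_part_def msubst_def using True eq by simp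
    also have "\<dots> \<longleftrightarrow> K \<in> madd P (Mv a b P)"
      using ne unfolding madd_def by (auto split: if_splits)
    finally show ?thesis .
  qed
  then show ?thesis by blast
qed

lemma madd_cancel: "madd P (madd P Q) = Q" by (auto simp: madd_def)

lemma Mv_Mv: "Mv b a (Mv a b P) = {K \<in> P. a \<in> K \<and> b \<notin> K}"
proof -
  show ?thesis
  proof (rule set_eqI)
    fix K
    show "K \<in> Mv b a (Mv a b P) \<longleftrightarrow> K \<in> {K \<in> P. a \<in> K \<and> b \<notin> K}"
    proof (cases "a \<in> K \<and> b \<notin> K")
      case True
      then have "a \<noteq> b" by blast
      have e: "insert a (insert b (K - {a}) - {b}) = K" using True by blast
      have "a \<notin> insert b (K - {a})" using \<open>a \<noteq> b\<close> by blast
      then show ?thesis using True e unfolding Mv_def by simp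
    next
      case False
      then show ?thesis unfolding Mv_def by blast
    qed
  qed
qed

lemma Mv_single:
  assumes "a \<in> I" "b \<notin> I"
  shows "Mv a b {I} = {insert b (I - {a})}"
proof -
  have "insert a (insert b (I - {a}) - {b}) = I" using assms by auto
  moreover have "K = insert b (I - {a})" if "b \<in> K" "a \<notin> K" "insert a (K - {b}) = I" for K
    using that assms by auto
  ultimately show ?thesis unfolding Mv_def using assms by auto
qed

theorem claim6p5:
  fixes m r :: nat and G :: "mlpoly set"
  assumes "m \<ge> 1" and "r \<le> m"
    and "lin_subspace m r G"
    and "\<forall>\<pi>\<in>Sym m r. \<pi> ` G = G"
  shows "G = {{}} \<or> G = Fmr m r"
proof -
  let ?S = "{I. I \<subseteq> {0..<m} \<and> card I = r}"
  have Gsub: "G \<subseteq> Fmr m r" and G0: "{} \<in> G" and Gadd: "\<And>P Q. P \<in> G \<Longrightarrow> Q \<in> G \<Longrightarrow> madd P Q \<in> G"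
    using assms(3) unfolding lin_subspace_def by auto
  have finS: "finite ?S" by (rule finite_subset[of _ "Pow {0..<m}"]) auto
  have PS: "P \<subseteq> ?S" if "P \<in> G" for P using Gsub that unfolding Fmr_def by blast
  have MvG: "Mv a b P \<in> G" if "P \<in> G" "a < m" "b < m" "a \<noteq> b" for P a b
  proof -
    have "pi_map m r (At a b) (\<lambda>_. False) \<in> Sym m r"
      unfolding Sym_def using GL_At[OF that(2-4)] by blast
    then have "pi_map m r (At a b) (\<lambda>_. False) P \<in> G" using assms(4) that(1) by blast
    then have "madd P (pi_map m r (At a b) (\<lambda>_. False) P) \<in> G" using Gadd that(1) by blast
    then show ?thesis using pi_At[OF that(2-4) PS[OF that(1)]] madd_cancel by simp
  qed
  have single: "\<exists>I. {I} \<in> G" if "P \<in> G" "P \<noteq> {}" for P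
    using that
  proof (induction "card P" arbitrary: P rule: less_induct)
    case less
    have finP: "finite P" using PS[OF less.prems(1)] finS finite_subset by blast
    show ?case
    proof (cases "card P = 1")
      case True
      then show ?thesis using less.prems(1) by (metis card_1_singletonE)
    next
      case False
      then have "card P \<ge> 2" using less.prems(2) finP by (simp add: card_gt_0_iff) (metis One_nat_def Suc_1 Suc_leI card_gt_0_iff le_neq_implies_less less.prems(2) finP)
      then obtain I J where IJ: "I \<in> P" "J \<in> P" "I \<noteq> J"
        by (metis card_le_Suc0_iff_eq not_less_eq_eq numeral_2_eq_2 finP)
      have IS: "I \<subseteq> {0..<m}" "card I = r" "J \<subseteq> {0..<m}" "card J = r"
        using PS[OF less.prems(1)] IJ by auto
      have fIJ: "finite I" "finite J" using IS finite_subset by auto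
      have "\<not> I \<subseteq> J"
      proof
        assume "I \<subseteq> J"
        then have "I \<subset> J" using IJ by auto
        then have "card I < card J" using fIJ psubset_card_mono by blast
        then show False using IS by simp
      qed
      then obtain a where a: "a \<in> I" "a \<notin> J" by blast
      have "\<not> J \<subseteq> I"
      proof
        assume "J \<subseteq> I"
        then have "J \<subset> I" using IJ by auto
        then have "card J < card I" using fIJ psubset_card_mono by blast
        then show False using IS by simp
      qed
      then obtain b where b: "b \<in> J" "b \<notin> I" by blast
      have abm: "a < m" "b < m" "a \<noteq> b" using a b IS by auto
      define Q where "Q = Mv b a (Mv a b P)"
      have QG: "Q \<in> G" unfolding Q_def using MvG[OF MvG[OF less.prems(1) abm] abm(2,1)] abm(3) by auto
      have Qeq: "Q = {K \<in> P. a \<in> K \<and> b \<notin> K}" unfolding Q_def by (rule Mv_Mv)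
      have "Q \<subset> P" using Qeq IJ b by auto
      then have "card Q < card P" using finP psubset_card_mono by blast
      moreover have "Q \<noteq> {}" using Qeq IJ a b by auto
      ultimately show ?thesis using less.hyps QG by blast
    qed
  qed
  have reach: "{K} \<in> G" if "{I} \<in> G" "I \<in> ?S" "K \<in> ?S" for I K
    using that
  proof (induction "card (K - I)" arbitrary: I rule: less_induct)
    case less
    show ?case
    proof (cases "K = I")
      case True then show ?thesis using less.prems by simp
    next
      case False
      have fIK: "finite I" "finite K" using less.prems finite_subset by auto
      have cIK: "card I = r" "card K = r" using less.prems by auto
      have "\<not> K \<subseteq> I"
      proof
        assume "K \<subseteq> I"
        then have "K \<subset> I" using False by auto
        then have "card K < card I" using fIK psubset_card_mono by blast
        then show False using cIK by simp
      qed
      then obtain b where b: "b \<in> K" "b \<notin> I" by blast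
      have "\<not> I \<subseteq> K"
      proof
        assume "I \<subseteq> K"
        then have "I \<subset> K" using False by auto
        then have "card I < card K" using fIK psubset_card_mono by blast
        then show False using cIK by simp
      qed
      then obtain a where a: "a \<in> I" "a \<notin> K" by blast
      have abm: "a < m" "b < m" "a \<noteq> b" using a b less.prems by auto
      define I' where "I' = insert b (I - {a})"
      have I'G: "{I'} \<in> G" using MvG[OF less.prems(1) abm] Mv_single[OF a(1) b(2)] I'_def by simp
      have "card I' = r" unfolding I'_def using fIK a b cIK
        card_insert_disjoint[of "I - {a}" b] card_Suc_Diff1[of I a] by simp
      then have I'S: "I' \<in> ?S" unfolding I'_def using less.prems abm by auto
      have "K - I' = (K - I) - {b}" unfolding I'_def using a by auto
      then have "card (K - I') < card (K - I)" using b fIK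
        by (metis Diff_iff card_Diff1_less finite_Diff)
      then show ?thesis using less.hyps I'G I'S less.prems(3) by blast
    qed
  qed
  show ?thesis
  proof (cases "G = {{}}")
    case True then show ?thesis by simp
  next
    case False
    then obtain P where "P \<in> G" "P \<noteq> {}" using G0 by blast
    then obtain I where I: "{I} \<in> G" using single by blast
    have IS: "I \<in> ?S" using PS[OF I] by auto
    have all: "P \<in> G" if "P \<subseteq> ?S" for P
    proof -
      have "finite P" using that finS finite_subset by blast
      then show ?thesis using that
      proof (induction P rule: finite_induct)
        case empty then show ?case using G0 by simp
      next
        case (insert K P)
        have "{K} \<in> G" using reach[OF I IS] insert by auto
        moreover have "P \<in> G" using insert by auto
        ultimately have "madd {K} P \<in> G" using Gadd by blast
        moreover have "madd {K} P = insert K P" using insert.hyps(2) unfolding madd_def by auto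
        ultimately show ?case by simp
      qed
    qed
    have "G = Fmr m r" using Gsub all unfolding Fmr_def by auto
    then show ?thesis by simp
  qed
qed

end
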